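(* In a monadic Markov logic network over a finite domain, the set of ground atoms (the random variables) has an exchangeable decomposition whose width equals the number of predicates.
   Context: A Markov logic network (MLN) is a finite set of pairs $(w,f)$ with $w\in\mathbb{R}$ and $f$ a function-free first-order formula containing no constants. Given a finite domain $\mathsf{D}$ of constants, the grounding replaces each formula by all its instantiations of logical variables with constants (same weight). The random variables are all ground atoms (binary); a world $\bm{x}$ (truth assignment to all ground atoms) has probability proportional to $\prod \exp(w)$ over ground formulas $(w,f)$ satisfied by $\bm{x}$. An MLN is monadic if all its predicates are unary. A variable decomposition $\{\bm{X}_1,\dots,\bm{X}_k\}$ partitions the variables; its width is $\max_i|\bm{X}_i|$. It is exchangeable if all blocks have equal size, each block is an ordered tuple, and for every permutation $\pi$ of $\{1,\dots,k\}$, $\Pr(\bm{X}_1=\bm{x}_1,\dots,\bm{X}_k=\bm{x}_k)=\Pr(\bm{X}_1=\bm{x}_{\pi(1)},\dots,\bm{X}_k=\bm{x}_{\pi(k)})$ for all block assignments. *)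

theory Defs
  imports Complex_Main "HOL-Library.FuncSet" "HOL-Combinatorics.Permutations"
begin

text \<open>Other connectives
(disjunction, implication, universal quantifier) are definable.\<close>

datatype 'p fml =
    Atom 'p "nat list"
  | Eq nat nat
  | Neg "'p fml"
  | Conj "'p fml" "'p fml"
  | Ex nat "'p fml"

fun fv :: "'p fml \<Rightarrow> nat set" where
  "fv (Atom p vs) = set vs"
| "fv (Eq x y) = {x, y}"
| "fv (Neg f) = fv f"
| "fv (Conj f g) = fv f \<union> fv g"
| "fv (Ex v f) = fv f - {v}"

fun wf_fml :: "'p set \<Rightarrow> ('p \<Rightarrow> nat) \<Rightarrow> 'p fml \<Rightarrow> bool" where
  "wf_fml P ar (Atom p vs) = (p \<in> P \<and> length vs = ar p)"
| "wf_fml P ar (Eq x y) = True"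
| "wf_fml P ar (Neg f) = wf_fml P ar f"
| "wf_fml P ar (Conj f g) = (wf_fml P ar f \<and> wf_fml P ar g)"
| "wf_fml P ar (Ex v f) = wf_fml P ar f"

definition ground_atoms :: "'p set \<Rightarrow> ('p \<Rightarrow> nat) \<Rightarrow> 'd set \<Rightarrow> ('p \<times> 'd list) set" where
  "ground_atoms P ar D = {(p, ds). p \<in> P \<and> length ds = ar p \<and> set ds \<subseteq> D}"

text \<open>A world is represented by the set of ground atoms that are true in it.
Satisfaction of a formula under an assignment of constants to logical variables
(quantifiers range over the domain D).\<close>
fun sat :: "'d set \<Rightarrow> ('p \<times> 'd list) set \<Rightarrow> (nat \<Rightarrow> 'd) \<Rightarrow> 'p fml \<Rightarrow> bool" where
  "sat D W \<sigma> (Atom p vs) = ((p, map \<sigma> vs) \<in> W)"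
| "sat D W \<sigma> (Eq x y) = (\<sigma> x = \<sigma> y)"
| "sat D W \<sigma> (Neg f) = (\<not> sat D W \<sigma> f)"
| "sat D W \<sigma> (Conj f g) = (sat D W \<sigma> f \<and> sat D W \<sigma> g)"
| "sat D W \<sigma> (Ex v f) = (\<exists>d\<in>D. sat D W (\<sigma>(v := d)) f)"

definition groundings :: "'d set \<Rightarrow> 'p fml \<Rightarrow> (nat \<Rightarrow> 'd) set" where
  "groundings D f = (fv f \<rightarrow>\<^sub>E D)"

definition is_mln :: "'p set \<Rightarrow> ('p \<Rightarrow> nat) \<Rightarrow> (real \<times> 'p fml) set \<Rightarrow> bool" where
  "is_mln P ar M = (finite P \<and> finite M \<and> (\<forall>(w, f) \<in> M. wf_fml P ar f))"

definition monadic :: "'p set \<Rightarrow> ('p \<Rightarrow> nat) \<Rightarrow> bool" where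
  "monadic P ar = (\<forall>p\<in>P. ar p = 1)"

definition world_weight :: "'d set \<Rightarrow> (real \<times> 'p fml) set \<Rightarrow> ('p \<times> 'd list) set \<Rightarrow> real" where
  "world_weight D M W =
     (\<Prod>(w, f) \<in> M. \<Prod>\<sigma> \<in> groundings D f. if sat D W \<sigma> f then exp w else 1)"

definition world_prob ::
  "'p set \<Rightarrow> ('p \<Rightarrow> nat) \<Rightarrow> 'd set \<Rightarrow> (real \<times> 'p fml) set \<Rightarrow> ('p \<times> 'd list) set \<Rightarrow> real" where
  "world_prob P ar D M W =
     world_weight D M W / (\<Sum>V \<in> Pow (ground_atoms P ar D). world_weight D M V)"

text \<open>A decomposition of the ground atoms into k blocks, each an ordered tuple of
length m: block i is (B i 0, ..., B i (m-1)).  Its width is m (the common block size).\<close>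
definition equal_size_decomposition ::
  "'a set \<Rightarrow> nat \<Rightarrow> nat \<Rightarrow> (nat \<Rightarrow> nat \<Rightarrow> 'a) \<Rightarrow> bool" where
  "equal_size_decomposition V k m B =
     (0 < k \<and> bij_betw (\<lambda>(i, j). B i j) ({..<k} \<times> {..<m}) V)"

text \<open>Exchangeability: for every permutation \<pi> of the blocks and every joint assignment
x_1..x_k of the blocks (a world W, block i having value j \<mapsto> [B i j \<in> W]),
Pr(X_1 = x_1, ..., X_k = x_k) = Pr(X_1 = x_(\<pi> 1), ..., X_k = x_(\<pi> k)).\<close>
definition exchangeable ::
  "('a set \<Rightarrow> real) \<Rightarrow> 'a set \<Rightarrow> nat \<Rightarrow> nat \<Rightarrow> (nat \<Rightarrow> nat \<Rightarrow> 'a) \<Rightarrow> bool" where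
  "exchangeable Pr V k m B =
     (equal_size_decomposition V k m B \<and>
      (\<forall>\<pi>. \<pi> permutes {..<k} \<longrightarrow>
        (\<forall>x :: nat \<Rightarrow> nat \<Rightarrow> bool.
           Pr {B i j | i j. i < k \<and> j < m \<and> x i j}
         = Pr {B i j | i j. i < k \<and> j < m \<and> x (\<pi> i) j})))"

end

theory Submission
  imports Defs
begin

lemma sat_coincide:
  "(\<forall>x\<in>fv f. \<sigma> x = \<sigma>' x) \<Longrightarrow> sat D W \<sigma> f = sat D W \<sigma>' f"
proof (induction f arbitrary: \<sigma> \<sigma>')
  case (Atom p vs)
  then have "map \<sigma> vs = map \<sigma>' vs" by simp
  then show ?case by (simp only: sat.simps)
next
  case (Conj f g)
  have "sat D W \<sigma> f = sat D W \<sigma>' f" using Conj.prems by (intro Conj.IH(1)) auto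
  moreover have "sat D W \<sigma> g = sat D W \<sigma>' g" using Conj.prems by (intro Conj.IH(2)) auto
  ultimately show ?case by simp
next
  case (Ex v f)
  have "\<And>d. sat D W (\<sigma>(v := d)) f = sat D W (\<sigma>'(v := d)) f"
    using Ex.prems by (intro Ex.IH) auto
  then show ?case by simp
qed auto

lemma sat_perm:
  assumes "\<tau> permutes D"
  shows "sat D {a. (fst a, map \<tau> (snd a)) \<in> W} \<sigma> f = sat D W (\<tau> \<circ> \<sigma>) f"
proof (induction f arbitrary: \<sigma>)
  case (Eq x y)
  then show ?case using permutes_inj[OF assms] by (auto simp: inj_eq)
next
  case (Ex v f)
  have eq: "\<And>d. \<tau> \<circ> \<sigma>(v := d) = (\<tau> \<circ> \<sigma>)(v := \<tau> d)" by auto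
  have s1: "sat D {a. (fst a, map \<tau> (snd a)) \<in> W} \<sigma> (Ex v f) = (\<exists>d\<in>D. sat D W ((\<tau> \<circ> \<sigma>)(v := \<tau> d)) f)"
    by (simp only: sat.simps Ex.IH eq)
  have "(\<exists>d\<in>D. sat D W ((\<tau> \<circ> \<sigma>)(v := \<tau> d)) f) = (\<exists>e\<in>\<tau> ` D. sat D W ((\<tau> \<circ> \<sigma>)(v := e)) f)"
    by auto
  also have "\<dots> = (\<exists>e\<in>D. sat D W ((\<tau> \<circ> \<sigma>)(v := e)) f)"
    using permutes_image[OF assms] by simp
  finally show ?case unfolding s1 by (simp only: sat.simps)
qed (auto simp: comp_def)

lemma weight_perm:
  fixes M :: "(real \<times> 'p fml) set" and W :: "('p \<times> 'd list) set"
  assumes "\<tau> permutes D"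
  shows "world_weight D M {a. (fst a, map \<tau> (snd a)) \<in> W} = world_weight D M W"
  unfolding world_weight_def
proof (rule prod.cong[OF refl], clarify)
  fix w :: real and f :: "'p fml"
  let ?S = "fv f"
  let ?h = "\<lambda>\<sigma>. restrict (\<tau> \<circ> \<sigma>) ?S"
  let ?g = "\<lambda>\<sigma>. if sat D W \<sigma> f then exp w else 1"
  have bij: "bij_betw ?h (?S \<rightarrow>\<^sub>E D) (?S \<rightarrow>\<^sub>E D)"
  proof (rule bij_betwI[where g = "\<lambda>\<sigma>. restrict (inv \<tau> \<circ> \<sigma>) ?S"])
    show "?h \<in> (?S \<rightarrow>\<^sub>E D) \<rightarrow> (?S \<rightarrow>\<^sub>E D)"
      using permutes_in_image[OF assms] by auto
    show "(\<lambda>\<sigma>. restrict (inv \<tau> \<circ> \<sigma>) ?S) \<in> (?S \<rightarrow>\<^sub>E D) \<rightarrow> (?S \<rightarrow>\<^sub>E D)"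
      using permutes_in_image[OF permutes_inv[OF assms]] by auto
    show "\<And>x. x \<in> ?S \<rightarrow>\<^sub>E D \<Longrightarrow> restrict (inv \<tau> \<circ> ?h x) ?S = x"
      using permutes_inverses[OF assms] by (auto simp: fun_eq_iff PiE_def extensional_def)
    show "\<And>x. x \<in> ?S \<rightarrow>\<^sub>E D \<Longrightarrow> ?h (restrict (inv \<tau> \<circ> x) ?S) = x"
      using permutes_inverses[OF assms] by (auto simp: fun_eq_iff PiE_def extensional_def)
  qed
  have "(\<Prod>\<sigma>\<in>groundings D f. if sat D {a. (fst a, map \<tau> (snd a)) \<in> W} \<sigma> f then exp w else 1)
      = (\<Prod>\<sigma>\<in>?S \<rightarrow>\<^sub>E D. ?g (?h \<sigma>))"
    unfolding groundings_def
  proof (rule prod.cong[OF refl])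
    fix \<sigma> assume "\<sigma> \<in> ?S \<rightarrow>\<^sub>E D"
    have "sat D W (\<tau> \<circ> \<sigma>) f = sat D W (?h \<sigma>) f"
      by (rule sat_coincide) auto
    then show "(if sat D {a. (fst a, map \<tau> (snd a)) \<in> W} \<sigma> f then exp w else 1) = ?g (?h \<sigma>)"
      by (simp only: sat_perm[OF assms])
  qed
  also have "\<dots> = (\<Prod>\<sigma>\<in>?S \<rightarrow>\<^sub>E D. ?g \<sigma>)"
    by (rule prod.reindex_bij_betw[OF bij])
  finally show "(\<Prod>\<sigma>\<in>groundings D f. if sat D {a. (fst a, map \<tau> (snd a)) \<in> W} \<sigma> f then exp w else 1)
      = (\<Prod>\<sigma>\<in>groundings D f. ?g \<sigma>)" unfolding groundings_def .
qed

theorem theorem5: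
  fixes P :: "'p set" and ar :: "'p \<Rightarrow> nat" and D :: "'d set"
    and M :: "(real \<times> 'p fml) set"
  assumes "is_mln P ar M"
    and "monadic P ar"
    and "finite D" and "D \<noteq> {}"
  shows "\<exists>k m B. exchangeable (world_prob P ar D M) (ground_atoms P ar D) k m B
                 \<and> m = card P"
proof -
  have finP: "finite P" using assms(1) by (simp add: is_mln_def)
  define k where "k = card D"
  define m where "m = card P"
  obtain dd where dd: "bij_betw dd {..<k} D"
    using ex_bij_betw_nat_finite[OF assms(3)] by (auto simp: k_def lessThan_atLeast0)
  obtain pp where pp: "bij_betw pp {..<m} P"
    using ex_bij_betw_nat_finite[OF finP] by (auto simp: m_def lessThan_atLeast0)
  define B where "B = (\<lambda>i j. (pp j, [dd i]))"
  have k0: "0 < k" using assms(3,4) by (simp add: k_def card_gt_0_iff)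
  have dec: "equal_size_decomposition (ground_atoms P ar D) k m B"
    unfolding equal_size_decomposition_def
  proof (intro conjI k0)
    have inj: "inj_on (\<lambda>(i, j). B i j) ({..<k} \<times> {..<m})"
      using bij_betw_imp_inj_on[OF dd] bij_betw_imp_inj_on[OF pp]
      by (auto simp: inj_on_def B_def)
    have img: "(\<lambda>(i, j). B i j) ` ({..<k} \<times> {..<m}) = ground_atoms P ar D"
    proof
      show "(\<lambda>(i, j). B i j) ` ({..<k} \<times> {..<m}) \<subseteq> ground_atoms P ar D"
        using bij_betwE[OF dd] bij_betwE[OF pp] assms(2)
        by (auto simp: B_def ground_atoms_def monadic_def)
    next
      show "ground_atoms P ar D \<subseteq> (\<lambda>(i, j). B i j) ` ({..<k} \<times> {..<m})"
      proof
        fix a assume "a \<in> ground_atoms P ar D"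
        then obtain p e where a: "a = (p, [e])" "p \<in> P" "e \<in> D"
          using assms(2) unfolding ground_atoms_def monadic_def
          by (auto simp: length_Suc_conv)
        obtain i where i: "i < k" "dd i = e" using a(3) bij_betw_imp_surj_on[OF dd] by auto
        obtain j where j: "j < m" "pp j = p" using a(2) bij_betw_imp_surj_on[OF pp] by auto
        show "a \<in> (\<lambda>(i, j). B i j) ` ({..<k} \<times> {..<m})"
          using i j a by (auto simp: B_def intro!: image_eqI[where x="(i,j)"])
      qed
    qed
    show "bij_betw (\<lambda>(i, j). B i j) ({..<k} \<times> {..<m}) (ground_atoms P ar D)"
      using inj img by (simp add: bij_betw_def)
  qed
  have "exchangeable (world_prob P ar D M) (ground_atoms P ar D) k m B"
    unfolding exchangeable_def
  proof (intro conjI dec allI impI)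
    fix \<pi> :: "nat \<Rightarrow> nat" and x :: "nat \<Rightarrow> nat \<Rightarrow> bool"
    assume \<pi>: "\<pi> permutes {..<k}"
    define \<tau> where "\<tau> = (\<lambda>d. if d \<in> D then dd (\<pi> (inv_into {..<k} dd d)) else d)"
    have "bij_betw (dd \<circ> \<pi> \<circ> inv_into {..<k} dd) D D"
      by (intro bij_betw_trans[OF bij_betw_inv_into[OF dd]] bij_betw_trans[OF permutes_imp_bij[OF \<pi>]] dd)
    then have "bij_betw \<tau> D D"
      by (rule bij_betw_cong[THEN iffD1, rotated]) (auto simp: \<tau>_def)
    then have \<tau>: "\<tau> permutes D" by (rule bij_imp_permutes) (simp add: \<tau>_def)
    have \<tau>dd: "\<And>i. i < k \<Longrightarrow> \<tau> (dd i) = dd (\<pi> i)"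
      using bij_betwE[OF dd] bij_betw_inv_into_left[OF dd] by (simp add: \<tau>_def)
    have \<pi>k: "\<And>i. i < k \<Longrightarrow> \<pi> i < k" using permutes_in_image[OF \<pi>] by simp
    let ?W = "{B i j |i j. i < k \<and> j < m \<and> x i j}"
    have seteq: "{B i j |i j. i < k \<and> j < m \<and> x (\<pi> i) j} = {a. (fst a, map \<tau> (snd a)) \<in> ?W}"
    proof (rule set_eqI, rule iffI)
      fix a assume "a \<in> {B i j |i j. i < k \<and> j < m \<and> x (\<pi> i) j}"
      then obtain i j where "a = B i j" "i < k" "j < m" "x (\<pi> i) j" by blast
      then show "a \<in> {a. (fst a, map \<tau> (snd a)) \<in> ?W}"
        using \<tau>dd \<pi>k by (auto simp: B_def)
    next
      fix a assume "a \<in> {a. (fst a, map \<tau> (snd a)) \<in> ?W}"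
      then obtain i' j where h: "(fst a, map \<tau> (snd a)) = B i' j" "i' < k" "j < m" "x i' j" by blast
      then obtain e where a: "a = (pp j, [e])" "\<tau> e = dd i'"
        by (cases a) (auto simp: B_def)
      have eD: "e \<in> D"
      proof (rule ccontr)
        assume "e \<notin> D"
        then have "\<tau> e = e" by (simp add: \<tau>_def)
        then show False using a(2) \<open>e \<notin> D\<close> bij_betwE[OF dd] h(2) by auto
      qed
      define i0 where "i0 = inv_into {..<k} dd e"
      have i0: "i0 < k" "dd i0 = e"
        using eD bij_betw_inv_into_right[OF dd] inv_into_into[of e dd "{..<k}"]
          bij_betw_imp_surj_on[OF dd] by (auto simp: i0_def)
      have "dd (\<pi> i0) = dd i'" using \<tau>dd[OF i0(1)] i0(2) a(2) by simp
      then have "\<pi> i0 = i'" using bij_betw_imp_inj_on[OF dd] \<pi>k[OF i0(1)] h(2)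
        by (auto simp: inj_on_def)
      then show "a \<in> {B i j |i j. i < k \<and> j < m \<and> x (\<pi> i) j}"
        using i0 a h by (auto simp: B_def)
    qed
    show "world_prob P ar D M ?W = world_prob P ar D M {B i j |i j. i < k \<and> j < m \<and> x (\<pi> i) j}"
      unfolding seteq world_prob_def weight_perm[OF \<tau>] ..
  qed
  then show ?thesis using m_def by blast
qed

end
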